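(* Let $L$ be a finite-dimensional Lie algebra over a field $K$ of characteristic $\neq 2$. The following are equivalent: (i) $L$ has an idempotent Hom-Lie structure $\varphi$ (i.e. $\varphi^2=\varphi$) which is different from the zero map and from the identity map; (ii) $L$ decomposes as a direct sum of vector spaces $L = A \oplus B$ with $A \neq 0$, $B \neq 0$, $[[A,A],B] = 0$ and $[[B,B],A] = 0$.
   Context: A Hom-Lie structure on a Lie algebra $L$ is a linear map $\varphi: L \to L$ satisfying $[[x,y],\varphi(z)] + [[z,x],\varphi(y)] + [[y,z],\varphi(x)] = 0$ for all $x,y,z \in L$. *)

theory Defs
  imports Main "HOL.Vector_Spaces"
begin

definition lie_algebra :: "('k::field \<Rightarrow> 'v::ab_group_add \<Rightarrow> 'v) \<Rightarrow> ('v \<Rightarrow> 'v \<Rightarrow> 'v) \<Rightarrow> bool" where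
  "lie_algebra scale br \<longleftrightarrow>
     vector_space scale \<and>
     (\<forall>x. Vector_Spaces.linear scale scale (br x)) \<and>
     (\<forall>y. Vector_Spaces.linear scale scale (\<lambda>x. br x y)) \<and>
     (\<forall>x. br x x = 0) \<and>
     (\<forall>x y z. br x (br y z) + br y (br z x) + br z (br x y) = 0)"

definition finite_dim :: "('k::field \<Rightarrow> 'v::ab_group_add \<Rightarrow> 'v) \<Rightarrow> bool" where
  "finite_dim scale \<longleftrightarrow> (\<exists>S. finite S \<and> module.span scale S = UNIV)"

definition hom_lie_structure ::
  "('k::field \<Rightarrow> 'v::ab_group_add \<Rightarrow> 'v) \<Rightarrow> ('v \<Rightarrow> 'v \<Rightarrow> 'v) \<Rightarrow> ('v \<Rightarrow> 'v) \<Rightarrow> bool" where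
  "hom_lie_structure scale br \<phi> \<longleftrightarrow>
     Vector_Spaces.linear scale scale \<phi> \<and>
     (\<forall>x y z. br (br x y) (\<phi> z) + br (br z x) (\<phi> y) + br (br y z) (\<phi> x) = 0)"

definition lie_bracket_set ::
  "('k::field \<Rightarrow> 'v::ab_group_add \<Rightarrow> 'v) \<Rightarrow> ('v \<Rightarrow> 'v \<Rightarrow> 'v) \<Rightarrow> 'v set \<Rightarrow> 'v set \<Rightarrow> 'v set" where
  "lie_bracket_set scale br X Y = module.span scale {br x y | x y. x \<in> X \<and> y \<in> Y}"

end

theory Submission
  imports Defs
begin

lemma bracket_set_zero:
  fixes scale :: "'k::field \<Rightarrow> 'v::ab_group_add \<Rightarrow> 'v"
  assumes VS: "vector_space scale"
    and LL: "\<forall>y. Vector_Spaces.linear scale scale (\<lambda>x. br x y)"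
  shows "lie_bracket_set scale br (lie_bracket_set scale br X Y) Z = {0} \<longleftrightarrow>
         (\<forall>x\<in>X. \<forall>y\<in>Y. \<forall>z\<in>Z. br (br x y) z = 0)"
proof -
  interpret vector_space scale by (rule VS)
  have add1: "br (u + v) z = br u z + br v z" for u v z
    using LL by (simp add: linear_iff)
  have sc1: "br (scale c u) z = scale c (br u z)" for c u z
    using LL by (simp add: linear_iff)
  show ?thesis
  proof
    assume H: "lie_bracket_set scale br (lie_bracket_set scale br X Y) Z = {0}"
    show "\<forall>x\<in>X. \<forall>y\<in>Y. \<forall>z\<in>Z. br (br x y) z = 0"
    proof (intro ballI)
      fix x y z assume "x \<in> X" "y \<in> Y" "z \<in> Z"
      then have "br x y \<in> lie_bracket_set scale br X Y"
        unfolding lie_bracket_set_def by (intro span_base) blast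
      then have "br (br x y) z \<in> lie_bracket_set scale br (lie_bracket_set scale br X Y) Z"
        using \<open>z \<in> Z\<close> unfolding lie_bracket_set_def[of _ _ "lie_bracket_set scale br X Y"]
        by (intro span_base) blast
      then show "br (br x y) z = 0" using H by simp
    qed
  next
    assume H: "\<forall>x\<in>X. \<forall>y\<in>Y. \<forall>z\<in>Z. br (br x y) z = 0"
    let ?P = "{u. \<forall>z\<in>Z. br u z = 0}"
    have zero: "br 0 z = 0" for z using add1[of 0 0 z] by simp
    have sP: "subspace ?P"
      unfolding subspace_def by (auto simp: add1 sc1 zero)
    have "lie_bracket_set scale br X Y \<subseteq> ?P"
      unfolding lie_bracket_set_def
    proof
      fix u assume "u \<in> span {br x y |x y. x \<in> X \<and> y \<in> Y}"
      then show "u \<in> ?P"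
        by (rule span_induct) (use sP H in auto)
    qed
    then have "{br u z |u z. u \<in> lie_bracket_set scale br X Y \<and> z \<in> Z} \<subseteq> {0}"
      by auto
    then have "span {br u z |u z. u \<in> lie_bracket_set scale br X Y \<and> z \<in> Z} \<subseteq> span {0}"
      by (rule span_mono)
    also have "span {0} = {0}"
      using span_insert_0[of "{}"] by simp
    finally show "lie_bracket_set scale br (lie_bracket_set scale br X Y) Z = {0}"
      unfolding lie_bracket_set_def[of _ _ "lie_bracket_set scale br X Y"] using span_zero by blast
  qed
qed

theorem lemma2p2:
  fixes scale :: "'k::field \<Rightarrow> 'v::ab_group_add \<Rightarrow> 'v"
    and br :: "'v \<Rightarrow> 'v \<Rightarrow> 'v"
  assumes "lie_algebra scale br"
    and "finite_dim scale"
    and "(2::'k) \<noteq> 0"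
  shows "(\<exists>\<phi>. hom_lie_structure scale br \<phi> \<and> \<phi> \<circ> \<phi> = \<phi> \<and> \<phi> \<noteq> (\<lambda>x. 0) \<and> \<phi> \<noteq> id)
     \<longleftrightarrow> (\<exists>A B. module.subspace scale A \<and> module.subspace scale B \<and>
                A \<inter> B = {0} \<and> (\<forall>v. \<exists>a\<in>A. \<exists>b\<in>B. v = a + b) \<and>
                A \<noteq> {0} \<and> B \<noteq> {0} \<and>
                lie_bracket_set scale br (lie_bracket_set scale br A A) B = {0} \<and>
                lie_bracket_set scale br (lie_bracket_set scale br B B) A = {0})"
proof -
  have VS: "vector_space scale" and LR: "\<forall>x. Vector_Spaces.linear scale scale (br x)"
    and LL: "\<forall>y. Vector_Spaces.linear scale scale (\<lambda>x. br x y)"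
    and alt: "\<And>x. br x x = 0"
    and jac: "\<And>x y z. br x (br y z) + br y (br z x) + br z (br x y) = 0"
    using assms(1) unfolding lie_algebra_def by auto
  interpret vector_space scale by (rule VS)
  have add1: "br (u + v) z = br u z + br v z" for u v z
    using LL by (simp add: linear_iff)
  have add2: "br z (u + v) = br z u + br z v" for u v z
    using LR by (simp add: linear_iff)
  have zero1: "br 0 z = 0" for z using add1[of 0 0 z] by simp
  have zero2: "br z 0 = 0" for z using add2[of z 0 0] by simp
  have anti: "br y x = - br x y" for x y
  proof -
    have "0 = br (x + y) (x + y)" by (simp add: alt)
    also have "\<dots> = br x y + br y x" unfolding add1 add2 by (simp add: alt)
    finally have "br x y + br y x = 0" by simp
    then show ?thesis by (simp add: add_eq_0_iff)
  qed
  have jac2: "br (br x y) z + br (br y z) x + br (br z x) y = 0" for x y z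
  proof -
    have "br (br x y) z + br (br y z) x + br (br z x) y
        = - (br x (br y z) + br y (br z x) + br z (br x y))"
      using anti[of "br x y" z] anti[of "br y z" x] anti[of "br z x" y] by simp
    then show ?thesis using jac by simp
  qed
  show ?thesis
  proof
    assume "\<exists>\<phi>. hom_lie_structure scale br \<phi> \<and> \<phi> \<circ> \<phi> = \<phi> \<and> \<phi> \<noteq> (\<lambda>x. 0) \<and> \<phi> \<noteq> id"
    then obtain \<phi> where hl: "hom_lie_structure scale br \<phi>" and idem: "\<phi> \<circ> \<phi> = \<phi>"
      and n0: "\<phi> \<noteq> (\<lambda>x. 0)" and nid: "\<phi> \<noteq> id" by (elim exE conjE) (rule that)
    have lin: "Vector_Spaces.linear scale scale \<phi>"
      and hom: "\<And>x y z. br (br x y) (\<phi> z) + br (br z x) (\<phi> y) + br (br y z) (\<phi> x) = 0"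
      using hl unfolding hom_lie_structure_def by auto
    have padd: "\<phi> (u + v) = \<phi> u + \<phi> v" for u v using lin by (simp add: linear_iff)
    have psc: "\<phi> (scale c u) = scale c (\<phi> u)" for c u using lin by (simp add: linear_iff)
    have p0: "\<phi> 0 = 0" using padd[of 0 0] by simp
    have pdiff: "\<phi> (u - v) = \<phi> u - \<phi> v" for u v
      using padd[of "u - v" v] by (simp add: algebra_simps)
    have pp: "\<phi> (\<phi> x) = \<phi> x" for x using idem by (metis comp_apply)
    define A where "A = {x. \<phi> x = x}"
    define B where "B = {x. \<phi> x = 0}"
    have sA: "subspace A" unfolding subspace_def A_def by (auto simp: padd psc p0)
    have sB: "subspace B" unfolding subspace_def B_def by (auto simp: padd psc p0)
    have AB: "A \<inter> B = {0}" unfolding A_def B_def using p0 by auto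
    have dec: "\<forall>v. \<exists>a\<in>A. \<exists>b\<in>B. v = a + b"
    proof
      fix v show "\<exists>a\<in>A. \<exists>b\<in>B. v = a + b"
        by (rule bexI[of _ "\<phi> v"], rule bexI[of _ "v - \<phi> v"])
          (auto simp: A_def B_def pp pdiff)
    qed
    have An: "A \<noteq> {0}"
    proof
      assume A0: "A = {0}"
      have "\<phi> x = 0" for x
      proof -
        have "\<phi> x \<in> A" unfolding A_def by (simp add: pp)
        then show ?thesis using A0 by simp
      qed
      then have "\<phi> = (\<lambda>x. 0)" by (simp add: fun_eq_iff)
      then show False using n0 by simp
    qed
    have Bn: "B \<noteq> {0}"
    proof
      assume B0: "B = {0}"
      have "\<phi> x = x" for x
      proof -
        have "x - \<phi> x \<in> B" unfolding B_def by (simp add: pdiff pp)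
        then have "x - \<phi> x = 0" using B0 by simp
        then show ?thesis by simp
      qed
      then have "\<phi> = id" by (simp add: fun_eq_iff)
      then show False using nid by simp
    qed
    have c1: "br (br x y) z = 0" if "x \<in> A" "y \<in> A" "z \<in> B" for x y z
    proof -
      have "\<phi> x = x" "\<phi> y = y" "\<phi> z = 0" using that unfolding A_def B_def by auto
      then have "br (br z x) y + br (br y z) x = 0" using hom[of x y z] by (simp add: zero2)
      then show ?thesis using jac2[of x y z] by (simp add: algebra_simps)
    qed
    have c2: "br (br x y) z = 0" if "x \<in> B" "y \<in> B" "z \<in> A" for x y z
    proof -
      have "\<phi> x = 0" "\<phi> y = 0" "\<phi> z = z" using that unfolding A_def B_def by auto
      then show ?thesis using hom[of x y z] by (simp add: zero2)
    qed
    show "\<exists>A B. subspace A \<and> subspace B \<and>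
                A \<inter> B = {0} \<and> (\<forall>v. \<exists>a\<in>A. \<exists>b\<in>B. v = a + b) \<and>
                A \<noteq> {0} \<and> B \<noteq> {0} \<and>
                lie_bracket_set scale br (lie_bracket_set scale br A A) B = {0} \<and>
                lie_bracket_set scale br (lie_bracket_set scale br B B) A = {0}"
    proof (intro exI conjI)
      show "lie_bracket_set scale br (lie_bracket_set scale br A A) B = {0}"
        using c1 bracket_set_zero[OF VS LL, of A A B] by blast
      show "lie_bracket_set scale br (lie_bracket_set scale br B B) A = {0}"
        using c2 bracket_set_zero[OF VS LL, of B B A] by blast
    qed (fact sA sB AB dec An Bn)+
  next
    assume "\<exists>A B. subspace A \<and> subspace B \<and>
                A \<inter> B = {0} \<and> (\<forall>v. \<exists>a\<in>A. \<exists>b\<in>B. v = a + b) \<and>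
                A \<noteq> {0} \<and> B \<noteq> {0} \<and>
                lie_bracket_set scale br (lie_bracket_set scale br A A) B = {0} \<and>
                lie_bracket_set scale br (lie_bracket_set scale br B B) A = {0}"
    then obtain A B where sA: "subspace A" and sB: "subspace B" and AB: "A \<inter> B = {0}"
      and dec: "\<forall>v. \<exists>a\<in>A. \<exists>b\<in>B. v = a + b" and An: "A \<noteq> {0}" and Bn: "B \<noteq> {0}"
      and h1: "lie_bracket_set scale br (lie_bracket_set scale br A A) B = {0}"
      and h2: "lie_bracket_set scale br (lie_bracket_set scale br B B) A = {0}"
      by (elim exE conjE) (rule that)
    have c1: "br (br x y) z = 0" if "x \<in> A" "y \<in> A" "z \<in> B" for x y z
      using h1 that bracket_set_zero[OF VS LL, of A A B] by blast
    have c2: "br (br x y) z = 0" if "x \<in> B" "y \<in> B" "z \<in> A" for x y z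
      using h2 that bracket_set_zero[OF VS LL, of B B A] by blast
    obtain pa where pa: "\<And>v. pa v \<in> A \<and> (\<exists>b\<in>B. v = pa v + b)"
      using dec by metis
    have uniq: "a = a'" if "a \<in> A" "a' \<in> A" "b \<in> B" "b' \<in> B" "a + b = a' + b'" for a a' b b'
    proof -
      have "a - a' = b' - b" using that(5) by (simp add: algebra_simps)
      moreover have "a - a' \<in> A" using sA that by (simp add: subspace_diff)
      moreover have "b' - b \<in> B" using sB that by (simp add: subspace_diff)
      ultimately have "a - a' \<in> A \<inter> B" by simp
      then show ?thesis using AB by simp
    qed
    have paI: "pa v = a" if "a \<in> A" "b \<in> B" "v = a + b" for v a b
    proof -
      obtain b' where b': "b' \<in> B" "v = pa v + b'" using pa by blast
      have "pa v + b' = a + b" using b'(2) that(3) by metis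
      then show ?thesis using uniq[of "pa v" a b' b] pa that b'(1) by blast
    qed
    have paA: "pa a = a" if "a \<in> A" for a
      using paI[of a 0 a] that sB by (simp add: subspace_0)
    have paB: "pa b = 0" if "b \<in> B" for b
      using paI[of 0 b b] that sA by (simp add: subspace_0)
    have padd: "pa (u + v) = pa u + pa v" for u v
    proof -
      obtain b1 where b1: "b1 \<in> B" "u = pa u + b1" using pa by blast
      obtain b2 where b2: "b2 \<in> B" "v = pa v + b2" using pa by blast
      have e: "u + v = (pa u + pa v) + (b1 + b2)"
        using b1(2) b2(2) by (metis add.assoc add.commute)
      show ?thesis
        by (rule paI[OF _ _ e]) (use pa sA sB b1(1) b2(1) in \<open>simp_all add: subspace_add\<close>)
    qed
    have psc: "pa (scale c u) = scale c (pa u)" for c u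
    proof -
      obtain b1 where b1: "b1 \<in> B" "u = pa u + b1" using pa by blast
      have e: "scale c u = scale c (pa u) + scale c b1"
        using b1(2) scale_right_distrib[of c "pa u" b1] by simp
      show ?thesis
        by (rule paI[OF _ _ e]) (use pa sA sB b1(1) in \<open>simp_all add: subspace_scale\<close>)
    qed
    have lin: "Vector_Spaces.linear scale scale pa"
      unfolding linear_iff using VS padd psc by blast
    define H where "H x y z = br (br x y) (pa z) + br (br z x) (pa y) + br (br y z) (pa x)" for x y z
    have Hcyc: "H x y z = H y z x" for x y z unfolding H_def by (simp add: algebra_simps)
    have Hadd: "H (x1 + x2) y z = H x1 y z + H x2 y z" for x1 x2 y z
      unfolding H_def by (simp add: add1 add2 padd algebra_simps)
    have HAAA: "H x y z = 0" if "x \<in> A" "y \<in> A" "z \<in> A" for x y z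
      unfolding H_def using that jac2[of x y z] by (simp add: paA algebra_simps)
    have HBBB: "H x y z = 0" if "x \<in> B" "y \<in> B" "z \<in> B" for x y z
      unfolding H_def using that by (simp add: paB zero2)
    have HAAB: "H x y z = 0" if "x \<in> A" "y \<in> A" "z \<in> B" for x y z
    proof -
      have "br (br z x) y + br (br y z) x = 0"
        using jac2[of x y z] c1[OF that] by (simp add: algebra_simps)
      then show ?thesis unfolding H_def using that by (simp add: paA paB zero2)
    qed
    have HBBA: "H x y z = 0" if "x \<in> B" "y \<in> B" "z \<in> A" for x y z
      unfolding H_def using that c2[OF that] by (simp add: paA paB zero2)
    have Hmem: "H x y z = 0" if "x \<in> A \<union> B" "y \<in> A \<union> B" "z \<in> A \<union> B" for x y z
    proof -
      have "x \<in> A \<or> x \<in> B" "y \<in> A \<or> y \<in> B" "z \<in> A \<or> z \<in> B" using that by auto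
      have c2: "H x y z = H y z x" "H x y z = H z x y" using Hcyc[of x y z] Hcyc[of y z x] by auto
      from this(1) this(2) that show ?thesis
        using \<open>x \<in> A \<or> x \<in> B\<close> \<open>y \<in> A \<or> y \<in> B\<close> \<open>z \<in> A \<or> z \<in> B\<close>
        by (smt (verit) HAAA HBBB HAAB HBBA)
    qed
    have Hall: "H x y z = 0" for x y z
    proof -
      have Hadd2: "H x (y1 + y2) z = H x y1 z + H x y2 z" for x y1 y2 z
        using Hadd[of y1 y2 z x] Hcyc[of x "y1+y2" z] Hcyc[of x y1 z] Hcyc[of x y2 z] by simp
      have Hadd3: "H x y (z1 + z2) = H x y z1 + H x y z2" for x y z1 z2
        using Hadd[of z1 z2 x y] Hcyc[of x y "z1+z2"] Hcyc[of y "z1+z2" x]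
          Hcyc[of x y z1] Hcyc[of y z1 x] Hcyc[of x y z2] Hcyc[of y z2 x] by simp
      obtain a1 b1 where "a1 \<in> A" "b1 \<in> B" "x = a1 + b1" using dec by blast
      moreover obtain a2 b2 where "a2 \<in> A" "b2 \<in> B" "y = a2 + b2" using dec by blast
      moreover obtain a3 b3 where "a3 \<in> A" "b3 \<in> B" "z = a3 + b3" using dec by blast
      ultimately show ?thesis
        by (simp add: Hadd Hadd2 Hadd3 Hmem)
    qed
    have hl: "hom_lie_structure scale br pa"
      unfolding hom_lie_structure_def using lin Hall unfolding H_def by blast
    have idem: "pa \<circ> pa = pa"
      using pa paA by (auto simp: fun_eq_iff)
    obtain a where "a \<in> A" "a \<noteq> 0" using An sA subspace_0 by blast
    then have n0: "pa \<noteq> (\<lambda>x. 0)" using paA by force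
    obtain b where "b \<in> B" "b \<noteq> 0" using Bn sB subspace_0 by blast
    then have nid: "pa \<noteq> id" using paB by force
    show "\<exists>\<phi>. hom_lie_structure scale br \<phi> \<and> \<phi> \<circ> \<phi> = \<phi> \<and> \<phi> \<noteq> (\<lambda>x. 0) \<and> \<phi> \<noteq> id"
      using hl idem n0 nid by blast
  qed
qed

end
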